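(* Let $A\in\mathbb{R}^{n\times d}$ have i.i.d. rows with mean zero and covariance $\Sigma$, $b\in\mathbb{R}^n$, and $A$ split row-wise into $m$ blocks $A^{(i)}\in\mathbb{R}^{(n/m)\times d}$. Let $f(x)=\frac1{2n}\|Ax-b\|_2^2+\frac\lambda2\|x\|_2^2$ ($\lambda>0$), $g=\nabla f$, $H=\frac1nA^TA+\lambda I$, $d_\lambda=\mathrm{tr}(\Sigma(\Sigma+\lambda I)^{-1})$ with $md_\lambda<n$, and $\tilde H=\left(\frac1m\sum_{i=1}^m\left(\frac{1}{1-\frac{md_\lambda}{n}}\frac mnA^{(i)T}A^{(i)}+\lambda I\right)^{-1}\right)^{-1}$. Let $\omega^\star=\arg\min f$ and $\omega_{t+1}=\omega_t-\tilde p_t$, where $\tilde p_t$ is the output of $s_t$ iterations of the preconditioned conjugate gradient method applied to the linear system $Hp=g(\omega_t)$ with preconditioner $\tilde H^{-1}$ and initial point $0$; set $\Delta_t=\omega_t-\omega^\star$. Let $\alpha_0=\|\Sigma-\frac1nA^TA\|$, $\alpha_1=\|\tilde H^{-1}-\mathbb{E}[\tilde H^{-1}]\|$, $\Omega_0=\mathbb{E}[\tilde H^{-1}]-(\Sigma+\lambda I)^{-1}$, $\alpha=(\sigma_{\max}+\lambda+\alpha_0)(\frac1{\lambda^2}\alpha_0+\alpha_1+\|\Omega_0\|)$, with $\sigma_{\min},\sigma_{\max}$ the extreme eigenvalues of $\Sigma$. Then \[\|\Delta_{t+1}\|\le\frac{\sqrt2\alpha'}{\sqrt{1-\alpha'^2}}\sqrt{\frac{\sigma_{\max}+\lambda+\alpha_0}{\sigma_{\min}+\lambda-\alpha_0}}\|\Delta_t\|,\qquad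 \alpha'=\sqrt{4\left(\frac{1-\sqrt{1-\frac{\alpha}{1-\alpha}}}{1+\sqrt{1-\frac{\alpha}{1-\alpha}}}\right)^{s_t}}.\]
   Context: $\|\cdot\|$ is the Euclidean norm on vectors and the spectral norm on matrices; $n/m$ is an integer. *)

theory Defs
  imports "HOL-Probability.Probability"
begin

definition spec_norm :: "real^'n^'m \<Rightarrow> real" where
  "spec_norm A = onorm (\<lambda>x. A *v x)"

definition eigenvalues :: "real^'n^'n \<Rightarrow> real set" where
  "eigenvalues S = {\<mu>. \<exists>v. v \<noteq> 0 \<and> S *v v = \<mu> *\<^sub>R v}"

text \<open>Preconditioned conjugate gradient for H p = g with preconditioner Pinv
  (i.e. z = Pinv r), initial point 0. State: (iterate x, residual r, direction p).\<close>
definition pcg_step :: "real^'n^'n \<Rightarrow> real^'n^'n \<Rightarrow>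
    ((real^'n) \<times> (real^'n) \<times> (real^'n)) \<Rightarrow> ((real^'n) \<times> (real^'n) \<times> (real^'n))" where
  "pcg_step H Pinv st = (case st of (x, r, p) \<Rightarrow>
     let z = Pinv *v r;
         a = (r \<bullet> z) / (p \<bullet> (H *v p));
         x' = x + a *\<^sub>R p;
         r' = r - a *\<^sub>R (H *v p);
         z' = Pinv *v r';
         beta = (r' \<bullet> z') / (r \<bullet> z);
         p' = z' + beta *\<^sub>R p
     in (x', r', p'))"

definition pcg :: "real^'n^'n \<Rightarrow> real^'n^'n \<Rightarrow> real^'n \<Rightarrow> nat \<Rightarrow> real^'n" where
  "pcg H Pinv g s = fst ((pcg_step H Pinv ^^ s) (0, g, Pinv *v g))"

end

theory Submission
  imports Defs
begin

definition symm :: "real^'n^'n \<Rightarrow> bool" where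
  "symm S \<longleftrightarrow> (\<forall>x y. x \<bullet> (S *v y) = (S *v x) \<bullet> y)"

definition cg_inv :: "real^'n^'n \<Rightarrow> real^'n^'n \<Rightarrow> real^'n \<Rightarrow> ((real^'n) \<times> (real^'n) \<times> (real^'n)) \<Rightarrow> bool" where
  "cg_inv H P y st = (case st of (x, r, p) \<Rightarrow> r = H *v (y - x) \<and>
      (\<exists>\<beta> q. p = P *v r + \<beta> *\<^sub>R q \<and> r \<bullet> q = 0 \<and> p \<bullet> (H *v q) = 0))"

definition energy :: "real^'n^'n \<Rightarrow> real^'n \<Rightarrow> real^'n \<Rightarrow> real" where
  "energy H y x = (y - x) \<bullet> (H *v (y - x))"

lemma cg_step:
  fixes H P :: "real^'n^'n"
  assumes sH: "symm H" and sP: "symm P"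
    and pdH: "\<And>u. u \<noteq> 0 \<Longrightarrow> u \<bullet> (H *v u) > 0"
    and key: "\<And>e. (e - P *v (H *v e)) \<bullet> (H *v (e - P *v (H *v e))) \<le> \<kappa> * (e \<bullet> (H *v e))"
    and k1: "\<kappa> < 1"
    and inv: "cg_inv H P y (x, r, p)"
  shows "cg_inv H P y (pcg_step H P (x, r, p)) \<and>
         energy H y (fst (pcg_step H P (x, r, p))) \<le> \<kappa> * energy H y x"
proof -
  have hs: "\<And>u v. u \<bullet> (H *v v) = v \<bullet> (H *v u)"
    using sH unfolding symm_def by (metis inner_commute)
  have ps: "\<And>u v. u \<bullet> (P *v v) = v \<bullet> (P *v u)"
    using sP unfolding symm_def by (metis inner_commute)
  have psd: "\<And>u. u \<bullet> (H *v u) \<ge> 0"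
    using pdH by (metis inner_zero_left less_le matrix_vector_mult_0_right order_refl)
  define e where "e = y - x"
  define z where "z = P *v r"
  define E where "E = e \<bullet> (H *v e)"
  have r: "r = H *v e" using inv by (simp add: cg_inv_def e_def)
  obtain \<beta> q where p: "p = z + \<beta> *\<^sub>R q" and rq: "r \<bullet> q = 0" and pq: "p \<bullet> (H *v q) = 0"
    using inv by (auto simp: cg_inv_def z_def)
  have E0: "E \<ge> 0" using psd E_def by simp
  have zHz0: "z \<bullet> (H *v z) \<ge> 0" using psd by simp
  have F0: "E - 2 * (r \<bullet> z) + z \<bullet> (H *v z) \<le> \<kappa> * E"
  proof -
    have "(e - z) \<bullet> (H *v (e - z)) = E - 2 * (r \<bullet> z) + z \<bullet> (H *v z)"
      using hs[of e z] unfolding E_def r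
      by (simp add: algebra_simps inner_diff_left inner_diff_right inner_commute)
    then show ?thesis using key[of e] by (simp add: z_def r E_def)
  qed
  have rp: "r \<bullet> p = r \<bullet> z" using p rq by (simp add: inner_add_right)
  have rz_ge: "2 * (r \<bullet> z) \<ge> (1 - \<kappa>) * E + z \<bullet> (H *v z)" using F0 by (simp add: algebra_simps)
  have rz0: "r \<bullet> z = 0 \<Longrightarrow> E = 0 \<and> r = 0 \<and> z = 0"
  proof -
    assume h: "r \<bullet> z = 0"
    have "(1 - \<kappa>) * E \<le> 0" using rz_ge h zHz0 by linarith
    then have "E \<le> 0" using mult_le_0_iff[of "1 - \<kappa>" E] k1 by auto
    then have "E = 0" using E0 by linarith
    then have "e = 0" using pdH E_def by (metis less_irrefl)
    then have "r = 0" using r by simp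
    then show ?thesis using `E = 0` z_def by simp
  qed
  define pHp where "pHp = p \<bullet> (H *v p)"
  define a where "a = (r \<bullet> z) / pHp"
  define x' where "x' = x + a *\<^sub>R p"
  define r' where "r' = r - a *\<^sub>R (H *v p)"
  define z' where "z' = P *v r'"
  define \<beta>' where "\<beta>' = (r' \<bullet> z') / (r \<bullet> z)"
  define p' where "p' = z' + \<beta>' *\<^sub>R p"
  have step: "pcg_step H P (x, r, p) = (x', r', p')"
    unfolding pcg_step_def Let_def x'_def r'_def p'_def z'_def \<beta>'_def a_def pHp_def z_def
    by simp
  have r'eq: "r' = H *v (y - x')"
    unfolding r'_def x'_def r e_def by (simp add: algebra_simps)
  show ?thesis
  proof (cases "p = 0 \<or> r \<bullet> z = 0")
    case True
    then have rz: "r \<bullet> z = 0" using rp by auto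
    then have EE: "E = 0" "r = 0" "z = 0" using rz0 by auto
    have a0: "a = 0" by (simp add: a_def rz)
    have "x' = x" "r' = r" by (simp_all add: x'_def r'_def a0)
    then have "z' = 0" "\<beta>' = 0" "p' = 0" using EE by (simp_all add: z'_def \<beta>'_def p'_def rz)
    show ?thesis using step `x' = x` `r' = r` `p' = 0` r'eq EE
      by (auto simp: cg_inv_def energy_def e_def[symmetric] E_def[symmetric] intro!: exI[of _ 0])
  next
    case False
    then have pne: "p \<noteq> 0" and rzne: "r \<bullet> z \<noteq> 0" by auto
    have pHp_pos: "pHp > 0" using pdH pne pHp_def by simp
    have ane: "a \<noteq> 0" using a_def rzne pHp_pos by simp
    have r'p: "r' \<bullet> p = 0"
      using pHp_pos rp unfolding r'_def a_def pHp_def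
      by (simp add: inner_diff_left inner_commute inner_diff_right)
    have r'q: "r' \<bullet> q = 0"
      using rq pq hs[of q p] unfolding r'_def
      by (simp add: inner_diff_left inner_diff_right inner_commute)
    have r'z: "r' \<bullet> z = 0"
    proof -
      have "z = p - \<beta> *\<^sub>R q" using p by simp
      then show ?thesis using r'p r'q by (simp add: inner_diff_right)
    qed
    have Hp: "H *v p = (1 / a) *\<^sub>R (r - r')" using ane unfolding r'_def by simp
    have conj: "p' \<bullet> (H *v p) = 0"
    proof -
      have "p' \<bullet> (H *v p) = z' \<bullet> (H *v p) + \<beta>' * pHp"
        by (simp add: p'_def pHp_def inner_add_left)
      also have "z' \<bullet> (H *v p) = (z' \<bullet> r - z' \<bullet> r') / a"
        by (simp add: Hp inner_diff_right)
      also have "\<beta>' * pHp = (r' \<bullet> z') / a"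
        using pHp_pos rzne by (simp add: \<beta>'_def a_def)
      also have "z' \<bullet> r = r' \<bullet> z"
        using ps[of r r'] unfolding z'_def z_def by (simp add: inner_commute)
      finally show ?thesis using r'z by (simp add: inner_commute diff_divide_distrib add_divide_distrib)
    qed
    have invn: "cg_inv H P y (x', r', p')"
      unfolding cg_inv_def using r'eq r'p conj
      by (auto simp: p'_def z'_def intro!: exI[of _ \<beta>'] exI[of _ p])
    have pHp_le: "pHp \<le> z \<bullet> (H *v z)"
    proof -
      have qz: "q \<bullet> (H *v z) = z \<bullet> (H *v q)" using hs by simp
      have zq: "z \<bullet> (H *v q) = - \<beta> * (q \<bullet> (H *v q))"
        using pq unfolding p by (simp add: inner_add_left)
      have "pHp = z \<bullet> (H *v z) - \<beta>^2 * (q \<bullet> (H *v q))"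
        unfolding pHp_def p
        by (simp add: algebra_simps inner_add_left inner_add_right qz zq power2_eq_square)
      moreover have "q \<bullet> (H *v q) \<ge> 0" by (rule psd)
      moreover have "\<beta>^2 * (q \<bullet> (H *v q)) \<ge> 0" using psd by simp
      ultimately show ?thesis by linarith
    qed
    have zHz_pos: "z \<bullet> (H *v z) > 0" using pHp_le pHp_pos by linarith
    have E': "energy H y x' = E - (r \<bullet> z)^2 / pHp"
    proof -
      have "y - x' = e - a *\<^sub>R p" by (simp add: x'_def e_def)
      then have "energy H y x' = E - 2 * a * (r \<bullet> p) + a^2 * pHp"
        using hs[of e p] unfolding energy_def E_def pHp_def r \<open>y - x' = e - a *\<^sub>R p\<close>
        by (simp add: algebra_simps inner_diff_left inner_diff_right inner_commute power2_eq_square)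
      then show ?thesis using rp pHp_pos by (simp add: a_def power2_eq_square field_simps)
    qed
    have "(r \<bullet> z)^2 / (z \<bullet> (H *v z)) \<le> (r \<bullet> z)^2 / pHp"
      using pHp_le pHp_pos by (simp add: frac_le)
    moreover have "E - (r \<bullet> z)^2 / (z \<bullet> (H *v z)) \<le> E - 2 * (r \<bullet> z) + z \<bullet> (H *v z)"
    proof -
      have "0 \<le> (z \<bullet> (H *v z) - r \<bullet> z)^2 / (z \<bullet> (H *v z))" using zHz_pos by simp
      also have "\<dots> = z \<bullet> (H *v z) - 2 * (r \<bullet> z) + (r \<bullet> z)^2 / (z \<bullet> (H *v z))"
        using zHz_pos by (simp add: field_simps power2_eq_square)
      finally show ?thesis by simp
    qed
    ultimately have "energy H y x' \<le> \<kappa> * E" using E' F0 by linarith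
    then show ?thesis using step invn by (simp add: energy_def e_def[symmetric] E_def[symmetric] energy_def)
  qed
qed

lemma scaleR_mat_vec[simp]: "((c::real) *\<^sub>R (M::real^'n^'m)) *v x = c *\<^sub>R (M *v x)"
  by (simp add: vec_eq_iff matrix_vector_mult_def sum_distrib_left mult.assoc)

lemma neg_mat_vec[simp]: "(- (M::real^'n^'m)) *v x = - (M *v x)"
  by (simp add: vec_eq_iff matrix_vector_mult_def sum_negf)

lemma mat_mult_vec[simp]: "(mat c :: real^'n^'n) *v x = c *\<^sub>R x"
proof -
  have "mat c = c *\<^sub>R (mat 1 :: real^'n^'n)" by (simp add: vec_eq_iff mat_def)
  then show ?thesis by simp
qed

lemma sum_mat_vec: "finite I \<Longrightarrow> (\<Sum>i\<in>I. (M i :: real^'n^'m)) *v x = (\<Sum>i\<in>I. M i *v x)"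
  by (induction I rule: finite_induct) (simp_all add: matrix_vector_mult_add_rdistrib)

lemma symm_transpose:
  assumes "transpose S = S" shows "symm (S::real^'n^'n)"
  unfolding symm_def
proof (intro allI)
  fix x y :: "real^'n"
  have "x v* S = S *v x" using transpose_matrix_vector[of S x] assms by simp
  have "x \<bullet> (S *v y) = (x v* S) \<bullet> y" by (simp only: dot_lmul_matrix)
  also have "\<dots> = (S *v x) \<bullet> y" using \<open>x v* S = S *v x\<close> by simp
  finally show "x \<bullet> (S *v y) = (S *v x) \<bullet> y" .
qed

lemma symm_swap:
  assumes "symm S" shows "x \<bullet> (S *v y) = y \<bullet> (S *v x)"
proof -
  have "x \<bullet> (S *v y) = (S *v x) \<bullet> y" using assms unfolding symm_def by blast
  then show ?thesis by (simp add: inner_commute)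
qed

lemma symm_add: "symm A \<Longrightarrow> symm B \<Longrightarrow> symm (A + B)"
  unfolding symm_def by (simp add: matrix_vector_mult_add_rdistrib inner_add_left inner_add_right)

lemma symm_diff: "symm A \<Longrightarrow> symm B \<Longrightarrow> symm (A - B)"
  unfolding symm_def by (simp add: matrix_vector_mult_diff_rdistrib inner_diff_left inner_diff_right)

lemma symm_scale: "symm A \<Longrightarrow> symm (c *\<^sub>R A)"
  unfolding symm_def by simp

lemma symm_mat: "symm (mat c :: real^'n^'n)"
  unfolding symm_def by simp

lemma symm_sum: "finite I \<Longrightarrow> (\<And>i. i \<in> I \<Longrightarrow> symm (M i)) \<Longrightarrow> symm (\<Sum>i\<in>I. M i)"
proof (induction I rule: finite_induct)
  case empty then show ?case unfolding symm_def by simp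
next
  case (insert a F) then show ?case by (simp add: symm_add)
qed

lemma gram_quad: "u \<bullet> ((transpose A ** A) *v u) = (norm (A *v u))^2"
  for A :: "real^'n^'m"
proof -
  have "u \<bullet> ((transpose A ** A) *v u) = u \<bullet> ((A *v u) v* A)"
    by (simp add: matrix_vector_mul_assoc[symmetric])
  also have "\<dots> = ((A *v u) v* A) \<bullet> u" by (simp add: inner_commute)
  also have "\<dots> = (A *v u) \<bullet> (A *v u)" by (simp only: dot_lmul_matrix)
  finally show ?thesis by (simp add: power2_norm_eq_inner)
qed

lemma symm_gram: "symm (transpose A ** (A :: real^'n^'m))"
  by (rule symm_transpose) (simp add: matrix_transpose_mul)

lemma matrix_inv_works:
  fixes S :: "real^'n^'n"
  assumes "invertible S"
  shows "S ** matrix_inv S = mat 1" "matrix_inv S ** S = mat 1"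
proof -
  have "\<exists>A'. S ** A' = mat 1 \<and> A' ** S = mat 1" using assms invertible_def by blast
  then have "S ** matrix_inv S = mat 1 \<and> matrix_inv S ** S = mat 1"
    unfolding matrix_inv_def by (rule someI_ex)
  then show "S ** matrix_inv S = mat 1" "matrix_inv S ** S = mat 1" by auto
qed

lemma pd_invertible:
  fixes S :: "real^'n^'n"
  assumes "\<And>u. u \<noteq> 0 \<Longrightarrow> u \<bullet> (S *v u) > 0"
  shows "invertible S"
proof -
  have "\<forall>x. S *v x = 0 \<longrightarrow> x = 0"
  proof (intro allI impI)
    fix x assume "S *v x = 0"
    show "x = 0"
    proof (rule ccontr)
      assume "x \<noteq> 0"
      then have "x \<bullet> (S *v x) > 0" by (rule assms)
      then show False using \<open>S *v x = 0\<close> by simp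
    qed
  qed
  then show ?thesis using matrix_left_invertible_ker[of S] invertible_left_inverse[of S] by blast
qed

lemma inv_apply:
  fixes S :: "real^'n^'n"
  assumes "invertible S"
  shows "S *v (matrix_inv S *v x) = x" "matrix_inv S *v (S *v x) = x"
  using matrix_inv_works[OF assms] by (simp_all add: matrix_vector_mul_assoc)

lemma symm_inv:
  fixes S :: "real^'n^'n"
  assumes "symm S" "invertible S"
  shows "symm (matrix_inv S)"
  unfolding symm_def
proof (intro allI)
  fix x y
  have "x \<bullet> (matrix_inv S *v y) = (S *v (matrix_inv S *v x)) \<bullet> (matrix_inv S *v y)"
    using inv_apply[OF assms(2)] by simp
  also have "\<dots> = (matrix_inv S *v x) \<bullet> (S *v (matrix_inv S *v y))"
    by (simp add: symm_def[THEN iffD1, OF assms(1)])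
  also have "\<dots> = (matrix_inv S *v x) \<bullet> y" using inv_apply[OF assms(2)] by simp
  finally show "x \<bullet> (matrix_inv S *v y) = (matrix_inv S *v x) \<bullet> y" .
qed

lemma inv_norm_bound:
  fixes S :: "real^'n^'n"
  assumes "invertible S" "c > 0" "\<And>u. u \<bullet> (S *v u) \<ge> c * (norm u)^2"
  shows "norm (matrix_inv S *v v) \<le> norm v / c"
proof -
  define w where "w = matrix_inv S *v v"
  have Sw: "S *v w = v" using inv_apply[OF assms(1)] w_def by simp
  have "c * (norm w)^2 \<le> w \<bullet> v" using assms(3)[of w] Sw by simp
  also have "\<dots> \<le> norm w * norm v" by (rule norm_cauchy_schwarz)
  finally have "c * (norm w)^2 \<le> norm w * norm v" .
  then have "c * norm w \<le> norm v"
    by (cases "norm w = 0") (auto simp: power2_eq_square)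
  then show ?thesis using assms(2) by (simp add: w_def field_simps)
qed

lemma quad_zero_lemma:
  fixes c A :: real
  assumes "A \<ge> 0" "\<And>t. 0 \<le> 2 * t * c + t^2 * A"
  shows "c = 0"
proof -
  define t where "t = - c / (A + 1)"
  have "0 \<le> 2 * t * c + t^2 * A" by (rule assms(2))
  then have "0 \<le> (2 * t * c + t^2 * A) * (A+1)^2" using assms(1) by simp
  also have "(2 * t * c + t^2 * A) * (A+1)^2 = 2 * c * (A+1) * ((A+1)*t) + A * ((A+1)*t)^2"
    by (simp add: algebra_simps power2_eq_square)
  also have "(A+1)*t = - c" using assms(1) unfolding t_def by (simp add: field_simps)
  also have "2 * c * (A+1) * (- c) + A * (- c)^2 = (- (c^2)) * (A + 2)"
    by (simp add: algebra_simps power2_eq_square)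
  finally have "c^2 * (A + 2) \<le> 0" by simp
  then have "c^2 \<le> 0" using assms(1) mult_le_0_iff[of "c^2" "A+2"] by auto
  then show ?thesis by simp
qed

lemma rayleigh_max:
  fixes S :: "real^'n^'n"
  assumes "symm S"
  shows "\<exists>\<mu> v. v \<noteq> 0 \<and> S *v v = \<mu> *\<^sub>R v \<and> (\<forall>u. u \<bullet> (S *v u) \<le> \<mu> * (norm u)^2)"
proof -
  have cont: "continuous_on (sphere 0 1) (\<lambda>u::real^'n. u \<bullet> (S *v u))"
    by (intro continuous_intros linear_continuous_on bounded_linear_intros matrix_vector_mul_bounded_linear)
  obtain v0 :: "real^'n" where "norm v0 = 1" using vector_choose_size[of 1] by auto
  then have ne: "sphere (0::real^'n) 1 \<noteq> {}" by auto
  obtain v where v: "v \<in> sphere 0 1" and vmax: "\<And>u. u \<in> sphere 0 1 \<Longrightarrow> u \<bullet> (S *v u) \<le> v \<bullet> (S *v v)"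
    using continuous_attains_sup[OF compact_sphere ne cont] by blast
  define \<mu> where "\<mu> = v \<bullet> (S *v v)"
  have nv: "norm v = 1" using v by simp
  have bound: "u \<bullet> (S *v u) \<le> \<mu> * (norm u)^2" for u
  proof (cases "u = 0")
    case True then show ?thesis by simp
  next
    case False
    have h: "inverse (norm u) * (inverse (norm u) * (u \<bullet> (S *v u))) \<le> \<mu>"
      using vmax[of "u /\<^sub>R norm u"] False unfolding \<mu>_def by (simp add: matrix_vector_mult_scaleR)
    have "u \<bullet> (S *v u) = (norm u)^2 * (inverse (norm u) * (inverse (norm u) * (u \<bullet> (S *v u))))"
      using False by (simp add: power2_eq_square field_simps)
    also have "\<dots> \<le> (norm u)^2 * \<mu>" using h by (rule mult_left_mono) simp
    finally show ?thesis by (simp add: mult.commute)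
  qed
  define w where "w = \<mu> *\<^sub>R v - S *v v"
  define A where "A = \<mu> * (norm w)^2 - w \<bullet> (S *v w)"
  have A0: "A \<ge> 0" using bound[of w] A_def by simp
  have "0 \<le> 2 * t * (w \<bullet> w) + t^2 * A" for t
  proof -
    have "0 \<le> \<mu> * (norm (v + t *\<^sub>R w))^2 - (v + t *\<^sub>R w) \<bullet> (S *v (v + t *\<^sub>R w))"
      using bound[of "v + t *\<^sub>R w"] by simp
    also have "\<dots> = \<mu> * (norm v)^2 - v \<bullet> (S *v v) + 2 * t * (\<mu> * (v \<bullet> w) - w \<bullet> (S *v v)) + t^2 * A"
    proof -
      have sw: "v \<bullet> (S *v w) = w \<bullet> (S *v v)" using symm_swap[OF assms] .
      have wv: "w \<bullet> v = v \<bullet> w" by (rule inner_commute)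
      have e1: "(v + t *\<^sub>R w) \<bullet> (S *v (v + t *\<^sub>R w)) = v \<bullet> (S *v v) + 2 * t * (w \<bullet> (S *v v)) + t^2 * (w \<bullet> (S *v w))"
        by (simp add: matrix_vector_right_distrib inner_add_left inner_add_right sw power2_eq_square algebra_simps)
      have e2: "(norm (v + t *\<^sub>R w))^2 = (norm v)^2 + 2 * t * (v \<bullet> w) + t^2 * (norm w)^2"
        unfolding power2_norm_eq_inner
        by (simp add: inner_add_left inner_add_right wv power2_eq_square algebra_simps)
      show ?thesis unfolding e1 e2 A_def by (simp add: algebra_simps)
    qed
    also have "\<mu> * (norm v)^2 - v \<bullet> (S *v v) = 0" using nv \<mu>_def by simp
    also have "\<mu> * (v \<bullet> w) - w \<bullet> (S *v v) = w \<bullet> w"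
      by (simp add: w_def inner_diff_left inner_diff_right inner_commute algebra_simps)
    finally show ?thesis by simp
  qed
  then have "w \<bullet> w = 0" using quad_zero_lemma[OF A0] by blast
  then have "S *v v = \<mu> *\<^sub>R v" by (simp add: w_def)
  moreover have "v \<noteq> 0" using nv by auto
  ultimately show ?thesis using bound by blast
qed

lemma rayleigh_min:
  fixes S :: "real^'n^'n"
  assumes "symm S"
  shows "\<exists>\<mu> v. v \<noteq> 0 \<and> S *v v = \<mu> *\<^sub>R v \<and> (\<forall>u. u \<bullet> (S *v u) \<ge> \<mu> * (norm u)^2)"
proof -
  have "symm ((-1) *\<^sub>R S)" using assms by (rule symm_scale)
  from rayleigh_max[OF this] obtain \<mu> v where v: "v \<noteq> 0" "((-1) *\<^sub>R S) *v v = \<mu> *\<^sub>R v"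
    and b: "\<forall>u. u \<bullet> (((-1) *\<^sub>R S) *v u) \<le> \<mu> * (norm u)^2" by blast
  have "S *v v = - (((-1) *\<^sub>R S) *v v)" by simp
  also have "\<dots> = (- \<mu>) *\<^sub>R v" using v(2) by simp
  finally have "S *v v = (- \<mu>) *\<^sub>R v" .
  moreover have "\<forall>u. u \<bullet> (S *v u) \<ge> (- \<mu>) * (norm u)^2" using b by (simp add: neg_le_iff_le minus_le_iff)
  ultimately show ?thesis using v(1) by blast
qed

lemma finite_eigenvalues:
  fixes S :: "real^'n^'n"
  assumes "symm S"
  shows "finite (eigenvalues S)"
proof -
  define f where "f \<mu> = (SOME v. v \<noteq> 0 \<and> S *v v = \<mu> *\<^sub>R v)" for \<mu>
  have fP: "f \<mu> \<noteq> 0 \<and> S *v f \<mu> = \<mu> *\<^sub>R f \<mu>" if "\<mu> \<in> eigenvalues S" for \<mu>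
  proof -
    have "\<exists>v. v \<noteq> 0 \<and> S *v v = \<mu> *\<^sub>R v" using that unfolding eigenvalues_def by blast
    then show ?thesis unfolding f_def by (rule someI_ex)
  qed
  have inj: "inj_on f (eigenvalues S)"
  proof (rule inj_onI)
    fix a b assume a: "a \<in> eigenvalues S" and b: "b \<in> eigenvalues S" and e: "f a = f b"
    have "a *\<^sub>R f a = S *v f a" using fP[OF a] by simp
    also have "\<dots> = S *v f b" using e by simp
    also have "\<dots> = b *\<^sub>R f b" using fP[OF b] by simp
    also have "\<dots> = b *\<^sub>R f a" using e by simp
    finally have "a *\<^sub>R f a = b *\<^sub>R f a" .
    then show "a = b" using fP[OF a] by (simp add: scaleR_cancel_right)
  qed
  have orth: "pairwise orthogonal (f ` eigenvalues S)"
    unfolding pairwise_def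
  proof (clarify)
    fix a b assume a: "a \<in> eigenvalues S" and b: "b \<in> eigenvalues S" and ne: "f a \<noteq> f b"
    then have "a \<noteq> b" by auto
    have "a * (f a \<bullet> f b) = (S *v f a) \<bullet> f b" using fP[OF a] by simp
    also have "\<dots> = f a \<bullet> (S *v f b)" using symm_swap[OF assms, of "f a" "f b"] by (simp add: inner_commute)
    also have "\<dots> = b * (f a \<bullet> f b)" using fP[OF b] by simp
    finally have "f a \<bullet> f b = 0" using \<open>a \<noteq> b\<close> by auto
    then show "orthogonal (f a) (f b)" by (simp add: orthogonal_def)
  qed
  have "0 \<notin> f ` eigenvalues S" using fP by auto
  then have "independent (f ` eigenvalues S)" using orth pairwise_orthogonal_independent by blast
  then have "finite (f ` eigenvalues S)" using finiteI_independent by blast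
  then show ?thesis using inj finite_imageD by blast
qed

lemma sigma_bounds:
  fixes S :: "real^'n^'n"
  assumes "symm S"
  shows "u \<bullet> (S *v u) \<le> Max (eigenvalues S) * (norm u)^2"
    "u \<bullet> (S *v u) \<ge> Min (eigenvalues S) * (norm u)^2"
proof -
  have fin: "finite (eigenvalues S)" using assms by (rule finite_eigenvalues)
  obtain \<mu> v where "v \<noteq> 0" "S *v v = \<mu> *\<^sub>R v" and b: "\<forall>u. u \<bullet> (S *v u) \<le> \<mu> * (norm u)^2"
    using rayleigh_max[OF assms] by blast
  then have "\<mu> \<in> eigenvalues S" unfolding eigenvalues_def by blast
  then have "\<mu> \<le> Max (eigenvalues S)" using fin by simp
  then show "u \<bullet> (S *v u) \<le> Max (eigenvalues S) * (norm u)^2"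
    using b by (meson mult_right_mono order_trans zero_le_power2)
  obtain \<mu>' v' where "v' \<noteq> 0" "S *v v' = \<mu>' *\<^sub>R v'" and b': "\<forall>u. u \<bullet> (S *v u) \<ge> \<mu>' * (norm u)^2"
    using rayleigh_min[OF assms] by blast
  then have "\<mu>' \<in> eigenvalues S" unfolding eigenvalues_def by blast
  then have "\<mu>' \<ge> Min (eigenvalues S)" using fin by simp
  then show "u \<bullet> (S *v u) \<ge> Min (eigenvalues S) * (norm u)^2"
    using b' by (meson mult_right_mono order_trans zero_le_power2)
qed

lemma mat_vec_neg: "(M::real^'n^'m) *v (- x) = - (M *v x)"
  using matrix_vector_mult_diff_distrib[of M 0 x] by simp

lemma cg_iter:
  fixes H P :: "real^'n^'n"
  assumes sH: "symm H" and sP: "symm P"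
    and pdH: "\<And>u. u \<noteq> 0 \<Longrightarrow> u \<bullet> (H *v u) > 0"
    and key: "\<And>e. (e - P *v (H *v e)) \<bullet> (H *v (e - P *v (H *v e))) \<le> \<kappa> * (e \<bullet> (H *v e))"
    and k0: "0 \<le> \<kappa>" and k1: "\<kappa> < 1" and y: "H *v y = g"
  shows "energy H y (pcg H P g s) \<le> \<kappa>^s * energy H y 0"
proof -
  have "cg_inv H P y ((pcg_step H P ^^ s) (0, g, P *v g)) \<and>
        energy H y (fst ((pcg_step H P ^^ s) (0, g, P *v g))) \<le> \<kappa>^s * energy H y 0"
  proof (induction s)
    case 0
    show ?case using y by (auto simp: cg_inv_def intro!: exI[of _ 0])
  next
    case (Suc s)
    obtain x r p where st: "(pcg_step H P ^^ s) (0, g, P *v g) = (x, r, p)" by (metis prod_cases3)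
    have I: "cg_inv H P y (x, r, p)" and J: "energy H y x \<le> \<kappa>^s * energy H y 0"
      using Suc.IH st by auto
    have K: "cg_inv H P y (pcg_step H P (x, r, p)) \<and>
        energy H y (fst (pcg_step H P (x, r, p))) \<le> \<kappa> * energy H y x"
      by (rule cg_step[OF sH sP pdH key k1 I])
    have "\<kappa> * energy H y x \<le> \<kappa> * (\<kappa>^s * energy H y 0)" using J k0 by (rule mult_left_mono)
    then show ?case using K st by simp
  qed
  then show ?thesis by (simp add: pcg_def)
qed


theorem theorem3p2:
  fixes M :: "'w measure"
    and A :: "'w \<Rightarrow> real^'d::finite^('m::finite \<times> 'k::finite)"
    and Sigma :: "real^'d^'d"
    and \<omega> :: 'w
    and b :: "real^('m \<times> 'k)"
    and lam :: real
    and f :: "real^'d \<Rightarrow> real"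
    and g :: "real^'d \<Rightarrow> real^'d"
    and w_star w_t :: "real^'d"
    and s :: nat
  assumes n_def: "n = real CARD('m \<times> 'k)"
    and m_def: "m = real CARD('m)"
    and H_def: "H = (1 / n) *\<^sub>R (transpose (A \<omega>) ** A \<omega>) + mat lam"
    and d_lam_def: "d_lam = trace (Sigma ** matrix_inv (Sigma + mat lam))"
    and Htinv_def: "Htinv = (\<lambda>v. (1 / m) *\<^sub>R (\<Sum>i\<in>UNIV.
            matrix_inv ((1 / (1 - m * d_lam / n)) *\<^sub>R ((m / n) *\<^sub>R
               (transpose (\<chi> j. A v $ (i, j)) ** (\<chi> j. A v $ (i, j)))) + mat lam)))"
    and EHtinv_def: "EHtinv = (\<chi> i j. prob_space.expectation M (\<lambda>v. Htinv v $ i $ j))"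
    and w_next_def: "w_next = w_t - pcg H (Htinv \<omega>) (g w_t) s"
    and alpha0_def: "alpha0 = spec_norm (Sigma - (1 / n) *\<^sub>R (transpose (A \<omega>) ** A \<omega>))"
    and alpha1_def: "alpha1 = spec_norm (Htinv \<omega> - EHtinv)"
    and Omega0_def: "Omega0 = EHtinv - matrix_inv (Sigma + mat lam)"
    and sig_min_def: "sig_min = Min (eigenvalues Sigma)"
    and sig_max_def: "sig_max = Max (eigenvalues Sigma)"
    and alpha_def: "alpha = (sig_max + lam + alpha0) * (alpha0 / lam\<^sup>2 + alpha1 + spec_norm Omega0)"
    and alphap_def: "alpha' = sqrt (4 * ((1 - sqrt (1 - alpha / (1 - alpha)))
                             / (1 + sqrt (1 - alpha / (1 - alpha)))) ^ s)"
    and M: "prob_space M"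
    and \<omega>: "\<omega> \<in> space M"
    and rows_rv: "\<And>r. (\<lambda>v. A v $ r) \<in> borel_measurable M"
    and rows_indep: "prob_space.indep_vars M (\<lambda>_. borel) (\<lambda>r v. A v $ r) UNIV"
    and rows_ident: "\<And>r r'. distr M borel (\<lambda>v. A v $ r) = distr M borel (\<lambda>v. A v $ r')"
    and mean_zero: "\<And>r j. integrable M (\<lambda>v. A v $ r $ j)
                          \<and> prob_space.expectation M (\<lambda>v. A v $ r $ j) = 0"
    and cov: "\<And>r i j. integrable M (\<lambda>v. A v $ r $ i * A v $ r $ j)
                  \<and> prob_space.expectation M (\<lambda>v. A v $ r $ i * A v $ r $ j) = Sigma $ i $ j"
    and lam_pos: "lam > 0"
    and md_lt_n: "m * d_lam < n"
    and f_def: "\<And>x. f x = (1 / (2 * n)) * (norm (A \<omega> *v x - b))\<^sup>2 + (lam / 2) * (norm x)\<^sup>2"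
    and g_grad: "\<And>x. (f has_derivative (\<lambda>h. g x \<bullet> h)) (at x)"
    and w_star_min: "\<And>x. f w_star \<le> f x"
    and alpha_half: "alpha < 1 / 2"
    and alpha'_lt: "alpha' < 1"
    and alpha0_lt: "alpha0 < sig_min + lam"
  shows "norm (w_next - w_star)
           \<le> sqrt 2 * alpha' / sqrt (1 - alpha'\<^sup>2)
              * sqrt ((sig_max + lam + alpha0) / (sig_min + lam - alpha0))
              * norm (w_t - w_star)"

proof -
  interpret PS: prob_space M by (rule M)
  define A0 where "A0 = A \<omega>"
  define Bm where "Bm = transpose A0 ** A0"
  define E0 where "E0 = Sigma - (1 / n) *\<^sub>R Bm"
  define L where "L = sig_max + lam + alpha0"
  define mu where "mu = sig_min + lam - alpha0"
  define delta where "delta = alpha0 / lam\<^sup>2 + alpha1 + spec_norm Omega0"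
  define P where "P = Htinv \<omega>"
  define Si where "Si = Sigma + mat lam"
  define Hinv where "Hinv = matrix_inv H"
  have n_pos: "n > 0" using n_def by simp
  have m_pos: "m > 0" using m_def by simp
  have Hv: "\<And>u. H *v u = (1/n) *\<^sub>R (Bm *v u) + lam *\<^sub>R u"
    by (simp add: H_def Bm_def A0_def matrix_vector_mult_add_rdistrib)
  have Bq: "\<And>u. u \<bullet> (Bm *v u) = (norm (A0 *v u))^2" by (simp add: Bm_def gram_quad)
  have sH: "symm H" unfolding H_def by (intro symm_add symm_scale symm_gram symm_mat)
  have Hlam: "u \<bullet> (H *v u) \<ge> lam * (norm u)^2" for u
  proof -
    have "u \<bullet> (H *v u) = (1/n) * (u \<bullet> (Bm *v u)) + lam * (norm u)^2"
      by (simp add: Hv inner_add_right power2_norm_eq_inner)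
    moreover have "(1/n) * (u \<bullet> (Bm *v u)) \<ge> 0" using n_pos Bq[of u] by simp
    ultimately show ?thesis by linarith
  qed
  have pdH: "\<And>u. u \<noteq> 0 \<Longrightarrow> u \<bullet> (H *v u) > 0"
  proof -
    fix u :: "real^'d" assume "u \<noteq> 0"
    then have "lam * (norm u)^2 > 0" using lam_pos by simp
    then show "u \<bullet> (H *v u) > 0" using Hlam[of u] by linarith
  qed
  have invH: "invertible H" using pdH by (rule pd_invertible)
  have Sij: "Sigma $ i $ j = Sigma $ j $ i" for i j
  proof -
    have "Sigma $ i $ j = PS.expectation (\<lambda>v. A v $ undefined $ i * A v $ undefined $ j)"
      using cov by simp
    also have "\<dots> = PS.expectation (\<lambda>v. A v $ undefined $ j * A v $ undefined $ i)"
      by (simp add: mult.commute)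
    also have "\<dots> = Sigma $ j $ i" using cov by simp
    finally show ?thesis .
  qed
  have sS: "symm Sigma" by (rule symm_transpose) (simp add: transpose_def vec_eq_iff Sij)
  have Spsd: "u \<bullet> (Sigma *v u) \<ge> 0" for u
  proof -
    define X where "X v = A v $ (undefined :: 'm \<times> 'k)" for v
    have c: "\<And>i j. Sigma $ i $ j = PS.expectation (\<lambda>v. X v $ i * X v $ j)"
      using cov unfolding X_def by simp
    have ci: "\<And>i j. integrable M (\<lambda>v. X v $ i * X v $ j)"
      using cov unfolding X_def by simp
    have "u \<bullet> (Sigma *v u) = (\<Sum>i\<in>UNIV. \<Sum>j\<in>UNIV. u$i * u$j * Sigma$i$j)"
      by (simp add: inner_vec_def matrix_vector_mult_def sum_distrib_left mult_ac)
    also have "\<dots> = (\<Sum>i\<in>UNIV. \<Sum>j\<in>UNIV. PS.expectation (\<lambda>v. u$i * u$j * (X v $ i * X v $ j)))"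
      by (simp add: c)
    also have "\<dots> = (\<Sum>i\<in>UNIV. PS.expectation (\<lambda>v. \<Sum>j\<in>UNIV. u$i * u$j * (X v $ i * X v $ j)))"
    proof -
      have inner: "PS.expectation (\<lambda>v. \<Sum>j\<in>UNIV. u$i * u$j * (X v $ i * X v $ j)) =
          (\<Sum>j\<in>UNIV. u$i * u$j * PS.expectation (\<lambda>v. X v $ i * X v $ j))" for i
        by (subst Bochner_Integration.integral_sum) (auto intro!: integrable_mult_right ci)
      show ?thesis by (simp add: inner)
    qed
    also have "\<dots> = PS.expectation (\<lambda>v. \<Sum>i\<in>UNIV. \<Sum>j\<in>UNIV. u$i * u$j * (X v $ i * X v $ j))"
      by (intro Bochner_Integration.integral_sum[symmetric]) (auto intro!: integrable_sum integrable_mult_right ci)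
    also have "\<dots> = PS.expectation (\<lambda>v. (\<Sum>i\<in>UNIV. u$i * X v $ i)^2)"
      by (simp add: power2_eq_square sum_product mult_ac)
    also have "\<dots> \<ge> 0" by simp
    finally show ?thesis .
  qed
  have Sup: "u \<bullet> (Sigma *v u) \<le> sig_max * (norm u)^2" for u
    using sigma_bounds(1)[OF sS] sig_max_def by simp
  have Slo: "u \<bullet> (Sigma *v u) \<ge> sig_min * (norm u)^2" for u
    using sigma_bounds(2)[OF sS] sig_min_def by simp
  have a0nn: "alpha0 \<ge> 0" unfolding alpha0_def spec_norm_def
    by (rule onorm_pos_le) (rule matrix_vector_mul_bounded_linear)
  have E0eq: "Sigma - (1 / n) *\<^sub>R (transpose (A \<omega>) ** A \<omega>) = E0" by (simp add: E0_def Bm_def A0_def)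
  have a0b: "norm (E0 *v v) \<le> alpha0 * norm v" for v
    unfolding alpha0_def spec_norm_def E0eq using onorm[OF matrix_vector_mul_bounded_linear] .
  have E0q: "\<bar>u \<bullet> (E0 *v u)\<bar> \<le> alpha0 * (norm u)^2" for u
  proof -
    have "\<bar>u \<bullet> (E0 *v u)\<bar> \<le> norm u * norm (E0 *v u)" by (rule Cauchy_Schwarz_ineq2)
    also have "\<dots> \<le> norm u * (alpha0 * norm u)" using a0b by (simp add: mult_left_mono)
    finally show ?thesis by (simp add: power2_eq_square mult_ac)
  qed
  have Hdecomp: "H *v u = Sigma *v u + lam *\<^sub>R u - E0 *v u" for u
    by (simp add: Hv E0_def matrix_vector_mult_diff_rdistrib)
  have Hq: "u \<bullet> (H *v u) = u \<bullet> (Sigma *v u) + lam * (norm u)^2 - u \<bullet> (E0 *v u)" for u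
    by (simp add: Hdecomp inner_add_right inner_diff_right power2_norm_eq_inner)
  have Hup: "u \<bullet> (H *v u) \<le> L * (norm u)^2" for u
  proof -
    have "- (u \<bullet> (E0 *v u)) \<le> alpha0 * (norm u)^2" using E0q[of u] by (simp add: abs_le_iff)
    then show ?thesis using Hq[of u] Sup[of u] unfolding L_def by (simp add: algebra_simps)
  qed
  have Hlo: "u \<bullet> (H *v u) \<ge> mu * (norm u)^2" for u
  proof -
    have "u \<bullet> (E0 *v u) \<le> alpha0 * (norm u)^2" using E0q[of u] by (simp add: abs_le_iff)
    then show ?thesis using Hq[of u] Slo[of u] unfolding mu_def by (simp add: algebra_simps)
  qed
  have mu_pos: "mu > 0" using alpha0_lt unfolding mu_def by simp
  have L_pos: "L > 0"
  proof -
    obtain v0 :: "real^'d" where v0: "norm v0 = 1" using vector_choose_size[of 1] by auto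
    show ?thesis using Hup[of v0] Hlo[of v0] v0 mu_pos by simp
  qed
  have sSi: "symm Si" unfolding Si_def by (intro symm_add sS symm_mat)
  have Silam: "u \<bullet> (Si *v u) \<ge> lam * (norm u)^2" for u
    using Spsd[of u] by (simp add: Si_def matrix_vector_mult_add_rdistrib inner_add_right power2_norm_eq_inner)
  have invSi: "invertible Si"
  proof (rule pd_invertible)
    fix u :: "real^'d" assume "u \<noteq> 0"
    then have "lam * (norm u)^2 > 0" using lam_pos by simp
    then show "u \<bullet> (Si *v u) > 0" using Silam[of u] by linarith
  qed
  have Siinv_b: "norm (matrix_inv Si *v v) \<le> norm v / lam" for v
    by (rule inv_norm_bound[OF invSi lam_pos Silam])
  have Hinv_b: "norm (Hinv *v v) \<le> norm v / lam" for v
    unfolding Hinv_def by (rule inv_norm_bound[OF invH lam_pos Hlam])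
  define cc where "cc = 1 / (1 - m * d_lam / n)"
  have cc_pos: "cc > 0"
  proof -
    have "m * d_lam / n < 1" using md_lt_n n_pos by simp
    then show ?thesis unfolding cc_def by simp
  qed
  define Bi where "Bi = (\<lambda>i::'m. transpose (\<chi> j. A \<omega> $ (i, j)) ** (\<chi> j. A \<omega> $ (i, j)))"
  define Mi where "Mi = (\<lambda>i::'m. cc *\<^sub>R ((m / n) *\<^sub>R Bi i) + mat lam)"
  have Peq: "P = (1/m) *\<^sub>R (\<Sum>i\<in>UNIV. matrix_inv (Mi i))"
    by (simp add: P_def Htinv_def Mi_def cc_def Bi_def)
  have Mi_pd: "u \<bullet> (Mi i *v u) \<ge> lam * (norm u)^2" for i u
  proof -
    have "u \<bullet> (Mi i *v u) = cc * (m / n) * (u \<bullet> (Bi i *v u)) + lam * (norm u)^2"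
      by (simp add: Mi_def matrix_vector_mult_add_rdistrib inner_add_right power2_norm_eq_inner)
    moreover have "cc * (m / n) * (u \<bullet> (Bi i *v u)) \<ge> 0"
      using cc_pos m_pos n_pos by (simp add: Bi_def gram_quad)
    ultimately show ?thesis by linarith
  qed
  have Mi_symm: "symm (Mi i)" for i unfolding Mi_def Bi_def
    by (intro symm_add symm_scale symm_gram symm_mat)
  have Mi_inv: "invertible (Mi i)" for i
  proof (rule pd_invertible)
    fix u :: "real^'d" assume "u \<noteq> 0"
    then have "lam * (norm u)^2 > 0" using lam_pos by simp
    then show "u \<bullet> (Mi i *v u) > 0" using Mi_pd[of u i] by linarith
  qed
  have sP: "symm P" unfolding Peq
    by (intro symm_scale symm_sum) (auto intro: symm_inv Mi_symm Mi_inv)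
  have a1nn: "alpha1 \<ge> 0" unfolding alpha1_def spec_norm_def
    by (rule onorm_pos_le) (rule matrix_vector_mul_bounded_linear)
  have o0nn: "spec_norm Omega0 \<ge> 0" unfolding spec_norm_def
    by (rule onorm_pos_le) (rule matrix_vector_mul_bounded_linear)
  have delta_nn: "delta \<ge> 0" unfolding delta_def using a0nn a1nn o0nn lam_pos by simp
  have Db: "norm (P *v r - Hinv *v r) \<le> delta * norm r" for r
  proof -
    define w where "w = Hinv *v r"
    have Hw: "H *v w = r" using inv_apply(1)[OF invH] unfolding w_def Hinv_def by simp
    have t1: "norm ((P - EHtinv) *v r) \<le> alpha1 * norm r"
      unfolding alpha1_def spec_norm_def P_def using onorm[OF matrix_vector_mul_bounded_linear] .
    have t2: "norm (Omega0 *v r) \<le> spec_norm Omega0 * norm r"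
      unfolding spec_norm_def using onorm[OF matrix_vector_mul_bounded_linear] .
    have t3: "norm (matrix_inv Si *v r - w) \<le> alpha0 / lam^2 * norm r"
    proof -
      have r_eq: "r = Si *v w - E0 *v w" using Hw Hdecomp[of w] by (simp add: Si_def matrix_vector_mult_add_rdistrib)
      have "matrix_inv Si *v r - w = - (matrix_inv Si *v (E0 *v w))"
        unfolding r_eq by (simp add: matrix_vector_mult_diff_distrib inv_apply(2)[OF invSi])
      then have "norm (matrix_inv Si *v r - w) = norm (matrix_inv Si *v (E0 *v w))" by simp
      also have "\<dots> \<le> norm (E0 *v w) / lam" by (rule Siinv_b)
      also have "\<dots> \<le> alpha0 * norm w / lam" using a0b[of w] lam_pos by (simp add: divide_right_mono)
      also have "\<dots> \<le> alpha0 * (norm r / lam) / lam"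
      proof -
        have "alpha0 * norm w \<le> alpha0 * (norm r / lam)"
          using Hinv_b[of r] a0nn unfolding w_def by (rule mult_left_mono)
        then show ?thesis by (rule divide_right_mono) (use lam_pos in simp)
      qed
      also have "\<dots> = alpha0 / lam^2 * norm r" by (simp add: power2_eq_square)
      finally show ?thesis .
    qed
    have deq: "P *v r - Hinv *v r = (P - EHtinv) *v r + Omega0 *v r + (matrix_inv Si *v r - w)"
      by (simp add: w_def Omega0_def Si_def matrix_vector_mult_diff_rdistrib)
    have "norm (P *v r - Hinv *v r) \<le> norm ((P - EHtinv) *v r) + norm (Omega0 *v r) + norm (matrix_inv Si *v r - w)"
      unfolding deq using norm_triangle_ineq[of "(P - EHtinv) *v r + Omega0 *v r" "matrix_inv Si *v r - w"]
        norm_triangle_ineq[of "(P - EHtinv) *v r" "Omega0 *v r"] by linarith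
    also have "\<dots> \<le> alpha1 * norm r + spec_norm Omega0 * norm r + alpha0 / lam^2 * norm r"
      using t1 t2 t3 by linarith
    also have "\<dots> = delta * norm r" by (simp add: delta_def algebra_simps)
    finally show ?thesis .
  qed
  have rb: "(norm (H *v e))^2 \<le> L * (e \<bullet> (H *v e))" for e
  proof -
    define r where "r = H *v e"
    define t where "t = 1 / L"
    have "0 \<le> mu * (norm (e - t *\<^sub>R r))^2" using mu_pos by simp
    then have "0 \<le> (e - t *\<^sub>R r) \<bullet> (H *v (e - t *\<^sub>R r))" using Hlo[of "e - t *\<^sub>R r"] by linarith
    also have "\<dots> = e \<bullet> r - 2 * t * (r \<bullet> r) + t^2 * (r \<bullet> (H *v r))"
      using symm_swap[OF sH, of e r]
      by (simp add: r_def[symmetric] matrix_vector_mult_diff_distrib inner_diff_left inner_diff_right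
          power2_eq_square algebra_simps inner_commute)
    also have "\<dots> \<le> e \<bullet> r - 2 * t * (r \<bullet> r) + t^2 * (L * (norm r)^2)"
      using Hup[of r] by (simp add: mult_left_mono)
    also have "\<dots> = e \<bullet> r - (norm r)^2 / L"
      using L_pos by (simp add: t_def power2_norm_eq_inner[symmetric] power2_eq_square field_simps)
    finally show ?thesis using L_pos by (simp add: r_def field_simps)
  qed
  have alpha_eq: "alpha = L * delta" by (simp add: alpha_def L_def delta_def)
  have key: "(e - P *v (H *v e)) \<bullet> (H *v (e - P *v (H *v e))) \<le> alpha^2 * (e \<bullet> (H *v e))" for e
  proof -
    define r where "r = H *v e"
    have Hr: "Hinv *v r = e" using inv_apply(2)[OF invH] by (simp add: r_def Hinv_def)
    define D where "D = P *v r - Hinv *v r"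
    have eD: "e - P *v (H *v e) = - D" by (simp add: D_def r_def[symmetric] Hr)
    have "(e - P *v (H *v e)) \<bullet> (H *v (e - P *v (H *v e))) = D \<bullet> (H *v D)"
      unfolding eD by (simp add: mat_vec_neg)
    also have "\<dots> \<le> L * (norm D)^2" by (rule Hup)
    also have "\<dots> \<le> L * (delta * norm r)^2"
      using Db[of r] L_pos by (simp add: D_def mult_left_mono power_mono)
    also have "\<dots> = L * delta^2 * (norm r)^2" by (simp add: power_mult_distrib)
    also have "\<dots> \<le> L * delta^2 * (L * (e \<bullet> (H *v e)))"
      using rb[of e] L_pos by (simp add: r_def mult_left_mono)
    also have "\<dots> = alpha^2 * (e \<bullet> (H *v e))" by (simp add: alpha_eq power2_eq_square)
    finally show ?thesis .
  qed
  define c0 where "c0 = (1 / n) *\<^sub>R (transpose A0 *v b)"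
  have fder: "(f has_derivative (\<lambda>h. (H *v x - c0) \<bullet> h)) (at x)" for x
  proof -
    have fform: "f = (\<lambda>x. (1/(2*n)) * ((A0 *v x - b) \<bullet> (A0 *v x - b)) + (lam/2) * (x \<bullet> x))"
      by (simp add: fun_eq_iff f_def A0_def power2_norm_eq_inner)
    have lin: "((\<lambda>x. A0 *v x) has_derivative (\<lambda>h. A0 *v h)) (at x)"
      by (rule bounded_linear_imp_has_derivative) (rule matrix_vector_mul_bounded_linear)
    define v where "v = A0 *v x - b"
    have t1: "v \<bullet> (A0 *v h) = (transpose A0 *v v) \<bullet> h" for h
      by (simp add: dot_lmul_matrix)
    have t2: "H *v x - c0 = (1/n) *\<^sub>R (transpose A0 *v v) + lam *\<^sub>R x"
      by (simp add: Hv Bm_def c0_def v_def matrix_vector_mul_assoc[symmetric] matrix_vector_mult_diff_distrib algebra_simps)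
    have eqD: "(\<lambda>h. (1/(2*n)) * ((A0 *v x - b) \<bullet> (A0 *v h - 0) + (A0 *v h - 0) \<bullet> (A0 *v x - b)) + (lam/2) * (x \<bullet> h + h \<bullet> x))
        = (\<lambda>h. (H *v x - c0) \<bullet> h)"
    proof
      fix h
      show "(1/(2*n)) * ((A0 *v x - b) \<bullet> (A0 *v h - 0) + (A0 *v h - 0) \<bullet> (A0 *v x - b)) + (lam/2) * (x \<bullet> h + h \<bullet> x)
        = (H *v x - c0) \<bullet> h"
        unfolding t2 v_def[symmetric] using t1[of h]
        by (simp add: inner_add_left inner_add_right inner_commute field_simps)
    qed
    have "((\<lambda>x. (1/(2*n)) * ((A0 *v x - b) \<bullet> (A0 *v x - b)) + (lam/2) * (x \<bullet> x)) has_derivative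
      (\<lambda>h. (1/(2*n)) * ((A0 *v x - b) \<bullet> (A0 *v h - 0) + (A0 *v h - 0) \<bullet> (A0 *v x - b)) + (lam/2) * (x \<bullet> h + h \<bullet> x))) (at x)"
      by (intro derivative_intros lin)
    then show ?thesis unfolding fform eqD .
  qed
  have gx: "g x = H *v x - c0" for x
  proof -
    have "(\<lambda>h. g x \<bullet> h) = (\<lambda>h. (H *v x - c0) \<bullet> h)"
      by (rule has_derivative_unique[OF g_grad fder])
    then have "(g x - (H *v x - c0)) \<bullet> (g x - (H *v x - c0)) = 0"
      by (simp add: inner_diff_left fun_eq_iff)
    then show ?thesis by simp
  qed
  have gs: "g w_star = 0"
  proof -
    have "(\<lambda>h. g w_star \<bullet> h) = (\<lambda>v. 0)"
      by (rule differential_zero_maxmin[of w_star UNIV f]) (auto simp: g_grad w_star_min)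
    then have "g w_star \<bullet> g w_star = 0" by (simp add: fun_eq_iff)
    then show ?thesis by simp
  qed
  define y where "y = w_t - w_star"
  have gy: "H *v y = g w_t"
    using gx[of w_t] gx[of w_star] gs by (simp add: y_def matrix_vector_mult_diff_distrib)
  have alpha_nn: "alpha \<ge> 0" using alpha_eq L_pos delta_nn by simp
  have a2nn: "alpha^2 \<ge> 0" by simp
  have a2lt: "alpha^2 < 1"
  proof -
    have "alpha * alpha \<le> alpha * 1" using alpha_nn alpha_half by (intro mult_left_mono) auto
    then show ?thesis using alpha_half by (simp add: power2_eq_square)
  qed
  define xs where "xs = pcg H P (g w_t) s"
  have cgb: "energy H y xs \<le> (alpha^2)^s * energy H y 0"
    unfolding xs_def by (rule cg_iter[OF sH sP pdH key a2nn a2lt gy])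
  have wn: "w_next - w_star = y - xs" by (simp add: w_next_def y_def P_def xs_def)
  have e1: "mu * (norm (w_next - w_star))^2 \<le> energy H y xs"
    unfolding energy_def wn by (rule Hlo)
  have e2: "energy H y 0 \<le> L * (norm y)^2" unfolding energy_def using Hup by simp
  have sq: "(norm (w_next - w_star))^2 \<le> (alpha^s * sqrt (L / mu) * norm y)^2"
  proof -
    have "mu * (norm (w_next - w_star))^2 \<le> (alpha^2)^s * (L * (norm y)^2)"
    proof -
      have "(alpha^2)^s * energy H y 0 \<le> (alpha^2)^s * (L * (norm y)^2)"
        by (rule mult_left_mono[OF e2]) simp
      then show ?thesis using e1 cgb by linarith
    qed
    then have "(norm (w_next - w_star))^2 \<le> (alpha^2)^s * (L * (norm y)^2) / mu"
      using mu_pos by (simp add: field_simps)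
    also have "\<dots> = (alpha^s * sqrt (L / mu) * norm y)^2"
    proof -
      have p: "(alpha^s)^2 = (alpha^2)^s" by (simp only: power_mult[symmetric] mult.commute)
      have q: "(sqrt (L / mu))^2 = L / mu" using L_pos mu_pos by simp
      show ?thesis unfolding power_mult_distrib p q by (simp add: field_simps)
    qed
    finally show ?thesis .
  qed
  have main: "norm (w_next - w_star) \<le> alpha^s * sqrt (L / mu) * norm y"
    by (rule power2_le_imp_le[OF sq]) (use alpha_nn L_pos mu_pos in simp)
  define beta where "beta = sqrt (1 - alpha / (1 - alpha))"
  define rho where "rho = (1 - beta) / (1 + beta)"
  have ap: "alpha' = sqrt (4 * rho ^ s)" by (simp add: alphap_def rho_def beta_def)
  have rho_ge: "alpha^2 \<le> rho"
  proof -
    define gam where "gam = alpha / (1 - alpha)"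
    have oma: "1 - alpha > 0" using alpha_half by simp
    have gam0: "gam \<ge> 0" using alpha_nn oma by (simp add: gam_def)
    have gam1: "gam < 1" using alpha_half oma by (simp add: gam_def)
    have b0: "beta \<ge> 0" using gam1 unfolding beta_def gam_def[symmetric] by simp
    have bsq: "beta^2 = 1 - gam" using gam1 by (simp add: beta_def gam_def)
    have b1: "beta \<le> 1" by (rule power2_le_imp_le) (use bsq gam0 in simp_all)
    have prod: "(1 - beta) * (1 + beta) = gam" using bsq by (simp add: algebra_simps power2_eq_square)
    have h1: "(1 - beta) * 2 \<ge> gam"
    proof -
      have "(1 - beta) * (1 + beta) \<le> (1 - beta) * 2" using b1 by (intro mult_left_mono) auto
      then show ?thesis using prod by simp
    qed
    have h2: "4 * alpha^2 \<le> gam"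
    proof -
      have "alpha * (2 * alpha - 1)^2 \<ge> 0" using alpha_nn by simp
      then have "4 * alpha^2 * (1 - alpha) \<le> alpha" by (simp add: algebra_simps power2_eq_square)
      then show ?thesis using oma by (simp add: gam_def pos_le_divide_eq)
    qed
    have "alpha^2 * (1 + beta) \<le> alpha^2 * 2" using b1 by (intro mult_left_mono) auto
    also have "\<dots> \<le> 1 - beta"
    proof -
      have "4 * alpha^2 \<le> (1 - beta) * 2" using h2 h1 by (rule order_trans)
      then show ?thesis by simp
    qed
    finally have "alpha^2 * (1 + beta) \<le> 1 - beta" .
    then show ?thesis using b0 by (simp add: rho_def pos_le_divide_eq)
  qed
  have as_le: "alpha^s \<le> alpha'"
  proof -
    have "(alpha^s)^2 = (alpha^2)^s" by (simp add: power_mult[symmetric] mult.commute)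
    also have "\<dots> \<le> rho^s" using rho_ge a2nn by (rule power_mono)
    also have "\<dots> \<le> 4 * rho^s"
    proof -
      have "rho \<ge> 0" using a2nn rho_ge by linarith
      then have "rho^s \<ge> 0" by simp
      then show ?thesis by linarith
    qed
    finally have "(alpha^s)^2 \<le> 4 * rho^s" .
    then have "sqrt ((alpha^s)^2) \<le> alpha'" unfolding ap by (rule real_sqrt_le_mono)
    then show ?thesis using alpha_nn by simp
  qed
  have ap_le: "alpha' \<le> sqrt 2 * alpha' / sqrt (1 - alpha'\<^sup>2)"
  proof -
    have "rho \<ge> 0" using a2nn rho_ge by linarith
    then have a'0: "alpha' \<ge> 0" unfolding ap by simp
    have "alpha' * alpha' \<le> alpha' * 1" using a'0 alpha'_lt by (intro mult_left_mono) auto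
    then have h: "0 < 1 - alpha'\<^sup>2" using alpha'_lt by (simp add: power2_eq_square)
    define s1 where "s1 = sqrt (1 - alpha'\<^sup>2)"
    have s1p: "s1 > 0" using h by (simp add: s1_def)
    have s11: "s1 \<le> 1" using h by (simp add: s1_def)
    have "alpha' * s1 \<le> alpha' * 1" using s11 a'0 by (rule mult_left_mono)
    then have "alpha' \<le> alpha' / s1" using s1p by (simp add: le_divide_eq)
    also have "\<dots> = 1 * (alpha' / s1)" by simp
    also have "\<dots> \<le> sqrt 2 * (alpha' / s1)" using a'0 s1p by (intro mult_right_mono) auto
    finally show ?thesis by (simp add: s1_def)
  qed
  have "alpha^s * sqrt (L / mu) * norm y \<le> sqrt 2 * alpha' / sqrt (1 - alpha'\<^sup>2) * sqrt (L / mu) * norm y"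
    using as_le ap_le L_pos mu_pos by (intro mult_right_mono) simp_all
  then show ?thesis using main unfolding L_def mu_def y_def by linarith
qed

end
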